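(* Let $m,n\geq2$ and let $\mathbf p\in\mathbb R^m$, $\mathbf q\in\mathbb R^n$ be probability vectors with all entries strictly positive. If $P\in\mathcal C(\mathbf p,\mathbf q)$ is local optimal and $V(P)$ is a tree, then $|V(P)|=m+n-1$.
   Context: $\mathcal C(\mathbf p,\mathbf q)$: nonnegative $m\times n$ matrices $P=(p_{i,j})$ with row sums $p_i$, column sums $q_j$. $V(P)=\{(i,j):p_{i,j}\neq0\}$. Graph notions on $[m]\times[n]$: distinct points adjacent iff they share a row or column; a circuit is a cyclic sequence $v_0,\dots,v_{s-1}$ ($s\ge4$) of pairwise distinct points $v_k=(i_k,j_k)$ with (indices mod $s$) $v_k,v_{k+1}$ adjacent and $(i_{k+2}-i_k)(j_{k+2}-j_k)\neq0$ for all $k$; a tree is a connected subset with no circuit. $H(A)=-\sum a_{i,j}\log a_{i,j}$ ($0\log0=0$). Moves on $P$ (each yields $P'\in\mathcal C(\mathbf p,\mathbf q)$ by replacing the chosen submatrix $A$ by $A'$): (M1) distinct rows $i_1,i_2$, distinct columns $j_1,j_2$, $a_{s,t}=p_{i_s,j_t}$; if $\max(a_{1,1},a_{2,2})\ge\max(a_{1,2},a_{2,1})$, put $b=\min(a_{1,2},a_{2,1})$, $a'_{s,s}=a_{s,s}+b$, $a'_{1,2}=a_{1,2}-b$, $a'_{2,1}=a_{2,1}-b$. (M2) same replacement, allowed when $a_{1,1}+a_{1,2}\ge a_{2,1}+a_{2,2}$, $a_{1,1}+a_{2,1}\ge a_{1,2}+a_{2,2}$, $a_{1,2}\ge a_{2,1}$.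 (M3) distinct rows $i_1,i_2$, distinct columns $j_1,\dots,j_r$ ($r\ge2$), $a_{s,k}=p_{i_s,j_k}$, allowed when $a_{2,k}=0$ ($k\ge2$) and $\sum_{k\ge2}a_{1,k}\le a_{2,1}\le\sum_{k\ge1}a_{1,k}$; replace by $a'_{1,1}=\sum_ka_{1,k}$, $a'_{1,k}=0$, $a'_{2,1}=a_{2,1}-\sum_{k\ge2}a_{1,k}$, $a'_{2,k}=a_{1,k}$ ($k\ge2$); moves may also be applied with rows and columns exchanged. $P$ is local optimal if no such move produces $P'$ with $H(P')<H(P)$. *)

theory Defs
  imports Complex_Main
begin

text \<open>Matrices are functions nat => nat => real; only the entries with row index
  i < m and column index j < n (0-based) matter.\<close>

type_synonym mat = "nat \<Rightarrow> nat \<Rightarrow> real"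

definition coupling :: "nat \<Rightarrow> nat \<Rightarrow> (nat \<Rightarrow> real) \<Rightarrow> (nat \<Rightarrow> real) \<Rightarrow> mat \<Rightarrow> bool" where
  "coupling m n p q P \<longleftrightarrow>
     (\<forall>i<m. \<forall>j<n. 0 \<le> P i j) \<and>
     (\<forall>i<m. (\<Sum>j<n. P i j) = p i) \<and>
     (\<forall>j<n. (\<Sum>i<m. P i j) = q j)"

definition supp :: "nat \<Rightarrow> nat \<Rightarrow> mat \<Rightarrow> (nat \<times> nat) set" where
  "supp m n P = {(i, j). i < m \<and> j < n \<and> P i j \<noteq> 0}"

definition adjacent :: "nat \<times> nat \<Rightarrow> nat \<times> nat \<Rightarrow> bool" where
  "adjacent u v \<longleftrightarrow> u \<noteq> v \<and> (fst u = fst v \<or> snd u = snd v)"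

definition is_circuit :: "(nat \<times> nat) list \<Rightarrow> bool" where
  "is_circuit vs \<longleftrightarrow> (let s = length vs in
     4 \<le> s \<and> distinct vs \<and>
     (\<forall>k<s. adjacent (vs ! k) (vs ! ((k + 1) mod s)) \<and>
            fst (vs ! ((k + 2) mod s)) \<noteq> fst (vs ! k) \<and>
            snd (vs ! ((k + 2) mod s)) \<noteq> snd (vs ! k)))"

definition connected_pts :: "(nat \<times> nat) set \<Rightarrow> bool" where
  "connected_pts S \<longleftrightarrow>
     (\<forall>u\<in>S. \<forall>v\<in>S. (u, v) \<in> {(x, y). x \<in> S \<and> y \<in> S \<and> adjacent x y}\<^sup>*)"

definition is_tree :: "(nat \<times> nat) set \<Rightarrow> bool" where
  "is_tree S \<longleftrightarrow> connected_pts S \<and> \<not> (\<exists>vs. set vs \<subseteq> S \<and> is_circuit vs)"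

definition entropy :: "nat \<Rightarrow> nat \<Rightarrow> mat \<Rightarrow> real" where
  "entropy m n P = - (\<Sum>(i, j)\<in>{..<m} \<times> {..<n}. P i j * ln (P i j))"

definition shift2 :: "mat \<Rightarrow> nat \<Rightarrow> nat \<Rightarrow> nat \<Rightarrow> nat \<Rightarrow> real \<Rightarrow> mat" where
  "shift2 P i1 i2 j1 j2 b = (\<lambda>i j.
     if (i, j) = (i1, j1) \<or> (i, j) = (i2, j2) then P i j + b
     else if (i, j) = (i1, j2) \<or> (i, j) = (i2, j1) then P i j - b
     else P i j)"

definition M1_ok :: "mat \<Rightarrow> nat \<Rightarrow> nat \<Rightarrow> nat \<Rightarrow> nat \<Rightarrow> bool" where
  "M1_ok P i1 i2 j1 j2 \<longleftrightarrow> max (P i1 j1) (P i2 j2) \<ge> max (P i1 j2) (P i2 j1)"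

definition M2_ok :: "mat \<Rightarrow> nat \<Rightarrow> nat \<Rightarrow> nat \<Rightarrow> nat \<Rightarrow> bool" where
  "M2_ok P i1 i2 j1 j2 \<longleftrightarrow>
     P i1 j1 + P i1 j2 \<ge> P i2 j1 + P i2 j2 \<and>
     P i1 j1 + P i2 j1 \<ge> P i1 j2 + P i2 j2 \<and>
     P i1 j2 \<ge> P i2 j1"

text \<open>Move M3: columns j1 (first) and the set J of the other columns j2..jr (r >= 2).\<close>
definition M3_ok :: "mat \<Rightarrow> nat \<Rightarrow> nat \<Rightarrow> nat \<Rightarrow> nat set \<Rightarrow> bool" where
  "M3_ok P i1 i2 j1 J \<longleftrightarrow>
     (\<forall>k\<in>J. P i2 k = 0) \<and>
     (\<Sum>k\<in>J. P i1 k) \<le> P i2 j1 \<and> P i2 j1 \<le> P i1 j1 + (\<Sum>k\<in>J. P i1 k)"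

definition M3_res :: "mat \<Rightarrow> nat \<Rightarrow> nat \<Rightarrow> nat \<Rightarrow> nat set \<Rightarrow> mat" where
  "M3_res P i1 i2 j1 J = (\<lambda>i j.
     if i = i1 \<and> j = j1 then P i1 j1 + (\<Sum>k\<in>J. P i1 k)
     else if i = i1 \<and> j \<in> J then 0
     else if i = i2 \<and> j = j1 then P i2 j1 - (\<Sum>k\<in>J. P i1 k)
     else if i = i2 \<and> j \<in> J then P i1 j
     else P i j)"

definition move0 :: "nat \<Rightarrow> nat \<Rightarrow> mat \<Rightarrow> mat \<Rightarrow> bool" where
  "move0 m n P P' \<longleftrightarrow>
     (\<exists>i1 i2 j1 j2. i1 < m \<and> i2 < m \<and> i1 \<noteq> i2 \<and> j1 < n \<and> j2 < n \<and> j1 \<noteq> j2 \<and>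
        (M1_ok P i1 i2 j1 j2 \<or> M2_ok P i1 i2 j1 j2) \<and>
        P' = shift2 P i1 i2 j1 j2 (min (P i1 j2) (P i2 j1))) \<or>
     (\<exists>i1 i2 j1 J. i1 < m \<and> i2 < m \<and> i1 \<noteq> i2 \<and> j1 < n \<and>
        J \<subseteq> {..<n} \<and> J \<noteq> {} \<and> j1 \<notin> J \<and>
        M3_ok P i1 i2 j1 J \<and> P' = M3_res P i1 i2 j1 J)"

definition transp :: "mat \<Rightarrow> mat" where
  "transp P = (\<lambda>i j. P j i)"

definition move :: "nat \<Rightarrow> nat \<Rightarrow> mat \<Rightarrow> mat \<Rightarrow> bool" where
  "move m n P P' \<longleftrightarrow> move0 m n P P' \<or> move0 n m (transp P) (transp P')"

definition local_optimal :: "nat \<Rightarrow> nat \<Rightarrow> mat \<Rightarrow> bool" where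
  "local_optimal m n P \<longleftrightarrow> (\<forall>P'. move m n P P' \<longrightarrow> entropy m n P \<le> entropy m n P')"

end

theory Submission
  imports Defs
begin


lemma mod2_ne: "2 < (L::nat) \<Longrightarrow> (t + 2) mod L \<noteq> t mod L"
proof
  assume L: "2 < L" and h: "(t + 2) mod L = t mod L"
  define r where "r = t mod L"
  have e: "(r + 2) mod L = r" using h unfolding r_def by (metis mod_add_left_eq)
  have rl: "r < L" using L unfolding r_def by simp
  show False
  proof (cases "r + 2 < L")
    case True then show False using e by simp
  next
    case False
    then have "(r + 2) mod L = (r + 2 - L) mod L" by (simp add: le_mod_geq)
    also have "\<dots> = r + 2 - L" using rl L by simp
    finally have "(r + 2) mod L = r + 2 - L" .
    then show False using e L rl False by linarith
  qed
qed

lemma even_mod_evenL: "even (L::nat) \<Longrightarrow> even (t mod L) = even t"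
  by (metis dvd_mod_iff even_mod_2_iff mod_mod_cancel)

lemma circ:
  fixes u :: "nat \<Rightarrow> nat" and L c :: nat
  assumes L4: "4 \<le> L" and Lev: "even L"
    and per: "\<And>t. u (t mod L) = u t"
    and inj: "\<And>t t'. even t = even t' \<Longrightarrow> t mod L \<noteq> t' mod L \<Longrightarrow> u t \<noteq> u t'"
  shows "is_circuit (map (\<lambda>t. if even (t + c) then (u t, u (Suc t)) else (u (Suc t), u t)) [0..<L])"
proof -
  define pr where "pr = (\<lambda>t. if even (t + c) then (u t, u (Suc t)) else (u (Suc t), u t))"
  have Lpos: "0 < L" using L4 by simp
  have prper: "pr (t mod L) = pr t" for t
  proof -
    have 1: "u (Suc (t mod L)) = u (Suc t)"
      by (metis mod_Suc_eq per)
    have 2: "even (t mod L + c) = even (t + c)"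
      using even_mod_evenL[OF Lev, of t] by simp
    show ?thesis unfolding pr_def using 1 2 per[of t] by simp
  qed
  have ne2: "u t \<noteq> u (t + 2)" for t
    using inj[of t "t+2"] mod2_ne[of L t] L4 by auto
  have ne2': "u (Suc t) \<noteq> u (Suc (Suc (Suc t)))" for t
    using ne2[of "Suc t"] by (simp add: numeral_2_eq_2)
  have ne2'': "u t \<noteq> u (Suc (Suc t))" for t
    using ne2[of t] by (simp add: numeral_2_eq_2)
  have eqmod: "t mod L = t' mod L" if "even t = even t'" "u t = u t'" for t t'
    using inj that by blast
  have injpr: "inj_on pr {0..<L}"
  proof (rule inj_onI)
    fix t t' assume t: "t \<in> {0..<L}" and t': "t' \<in> {0..<L}" and e: "pr t = pr t'"
    show "t = t'"
    proof (rule ccontr)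
      assume ne: "t \<noteq> t'"
      have key: False if lt: "x < y" "y < L" "pr x = pr y" for x y
      proof (cases "even (x + c) = even (y + c)")
        case True
        then have "even x = even y" by auto
        moreover have "u x = u y" using lt(3) True unfolding pr_def by (auto split: if_splits)
        ultimately have "x mod L = y mod L" using eqmod by blast
        then show False using lt by simp
      next
        case False
        then have "u x = u (Suc y) \<and> u (Suc x) = u y" using lt(3) unfolding pr_def
          by (auto split: if_splits)
        moreover have "even x = even (Suc y)" "even (Suc x) = even y" using False by auto
        ultimately have a: "x mod L = Suc y mod L" and b: "Suc x mod L = y mod L"
          using eqmod by blast+
        have "Suc x = y" using b lt by simp
        then have "x = Suc (Suc x) mod L" using a lt by simp
        then show False using lt mod2_ne[of L x] L4 by (simp add: numeral_2_eq_2)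
      qed
      show False
        using ne key[of t t'] key[of t' t] t t' e by (cases "t < t'") auto
    qed
  qed
  have nth1: "map pr [0..<L] ! ((k + 1) mod L) = pr (k + 1)" for k
    using Lpos prper[of "k+1"] by simp
  have nth2: "map pr [0..<L] ! ((k + 2) mod L) = pr (k + 2)" for k
    using Lpos prper[of "k+2"] by simp
  show ?thesis
    unfolding is_circuit_def Let_def pr_def[symmetric]
  proof (intro conjI allI impI)
    show "4 \<le> length (map pr [0..<L])" using L4 by simp
    show "distinct (map pr [0..<L])" using injpr by (simp add: distinct_map)
  next
    fix k assume k: "k < length (map pr [0..<L])"
    then have kk: "map pr [0..<L] ! k = pr k" by simp
    have A: "adjacent (pr k) (pr (k+1))"
      unfolding adjacent_def pr_def using ne2''[of k] by auto
    have B: "fst (pr (k+2)) \<noteq> fst (pr k) \<and> snd (pr (k+2)) \<noteq> snd (pr k)"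
    proof -
      have "even (k + 2 + c) = even (k + c)" by simp
      then show ?thesis
        unfolding pr_def using ne2''[of k] ne2'[of k]
        by (cases "even (k + c)") (auto simp: numeral_2_eq_2 dest: sym)
    qed
    show "adjacent (map pr [0..<L] ! k) (map pr [0..<L] ! ((k + 1) mod length (map pr [0..<L])))"
      using A kk nth1 by simp
    show "fst (map pr [0..<L] ! ((k + 2) mod length (map pr [0..<L]))) \<noteq> fst (map pr [0..<L] ! k)"
      using B kk nth2 by simp
    show "snd (map pr [0..<L] ! ((k + 2) mod length (map pr [0..<L]))) \<noteq> snd (map pr [0..<L] ! k)"
      using B kk nth2 by simp
  qed
qed

definition nxt :: "(nat \<times> nat) set \<Rightarrow> bool \<Rightarrow> nat \<Rightarrow> nat \<Rightarrow> nat" where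
  "nxt T ev x y = (if ev then (SOME i. i \<noteq> x \<and> (i, y) \<in> T) else (SOME j. j \<noteq> x \<and> (y, j) \<in> T))"

primrec wk :: "(nat \<times> nat) set \<Rightarrow> nat \<Rightarrow> nat \<Rightarrow> nat \<Rightarrow> nat \<times> nat" where
  "wk T i0 j0 0 = (i0, j0)"
| "wk T i0 j0 (Suc k) = (snd (wk T i0 j0 k), nxt T (even k) (fst (wk T i0 j0 k)) (snd (wk T i0 j0 k)))"

lemma walk_circuit:
  assumes fin: "finite T" and v0: "(i0, j0) \<in> T"
    and deg: "\<forall>(i, j)\<in>T. (\<exists>i'. i' \<noteq> i \<and> (i', j) \<in> T) \<and> (\<exists>j'. j' \<noteq> j \<and> (i, j') \<in> T)"
  shows "\<exists>vs. set vs \<subseteq> T \<and> is_circuit vs"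
proof -
  define w where "w = (\<lambda>k. fst (wk T i0 j0 k))"
  have sndw: "snd (wk T i0 j0 k) = w (Suc k)" for k unfolding w_def by simp
  have inv: "(if even k then (w k, w (Suc k)) else (w (Suc k), w k)) \<in> T \<and> w (Suc (Suc k)) \<noteq> w k" for k
  proof (induction k)
    case 0
    have "w (Suc (Suc 0)) = nxt T True i0 j0" unfolding w_def by simp
    also have "\<dots> = (SOME i. i \<noteq> i0 \<and> (i, j0) \<in> T)" by (simp add: nxt_def)
    finally have e: "w (Suc (Suc 0)) = (SOME i. i \<noteq> i0 \<and> (i, j0) \<in> T)" .
    have "\<exists>i. i \<noteq> i0 \<and> (i, j0) \<in> T" using deg v0 by blast
    then have "w (Suc (Suc 0)) \<noteq> i0" using e by (metis (mono_tags, lifting) someI_ex)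
    moreover have "w 0 = i0" "w (Suc 0) = j0" unfolding w_def by simp_all
    ultimately show ?case using v0 by simp
  next
    case (Suc k)
    have st: "(if even (Suc k) then (w (Suc k), w (Suc (Suc k))) else (w (Suc (Suc k)), w (Suc k))) \<in> T"
    proof (cases "even k")
      case True
      have "w (Suc (Suc k)) = nxt T True (w k) (w (Suc k))"
        unfolding w_def using True by simp
      then have e: "w (Suc (Suc k)) = (SOME i. i \<noteq> w k \<and> (i, w (Suc k)) \<in> T)" by (simp add: nxt_def)
      have mem: "(w k, w (Suc k)) \<in> T" using Suc.IH True by simp
      have "\<exists>i. i \<noteq> w k \<and> (i, w (Suc k)) \<in> T" using deg mem by blast
      then have "(w (Suc (Suc k)), w (Suc k)) \<in> T" using e by (metis (mono_tags, lifting) someI_ex)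
      then show ?thesis using True by simp
    next
      case False
      have "w (Suc (Suc k)) = nxt T False (w k) (w (Suc k))"
        unfolding w_def using False by simp
      then have e: "w (Suc (Suc k)) = (SOME j. j \<noteq> w k \<and> (w (Suc k), j) \<in> T)" by (simp add: nxt_def)
      have mem: "(w (Suc k), w k) \<in> T" using Suc.IH False by simp
      have "\<exists>j. j \<noteq> w k \<and> (w (Suc k), j) \<in> T" using deg mem by blast
      then have "(w (Suc k), w (Suc (Suc k))) \<in> T" using e by (metis (mono_tags, lifting) someI_ex)
      then show ?thesis using False by simp
    qed
    have ne: "w (Suc (Suc (Suc k))) \<noteq> w (Suc k)"
    proof (cases "even k")
      case False
      have "w (Suc (Suc (Suc k))) = nxt T True (w (Suc k)) (w (Suc (Suc k)))"
        unfolding w_def using False by simp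
      then have e: "w (Suc (Suc (Suc k))) = (SOME i. i \<noteq> w (Suc k) \<and> (i, w (Suc (Suc k))) \<in> T)" by (simp add: nxt_def)
      have mem: "(w (Suc k), w (Suc (Suc k))) \<in> T" using st False by simp
      have "\<exists>i. i \<noteq> w (Suc k) \<and> (i, w (Suc (Suc k))) \<in> T" using deg mem by blast
      then show ?thesis using e by (metis (mono_tags, lifting) someI_ex)
    next
      case True
      have "w (Suc (Suc (Suc k))) = nxt T False (w (Suc k)) (w (Suc (Suc k)))"
        unfolding w_def using True by simp
      then have e: "w (Suc (Suc (Suc k))) = (SOME j. j \<noteq> w (Suc k) \<and> (w (Suc (Suc k)), j) \<in> T)" by (simp add: nxt_def)
      have mem: "(w (Suc (Suc k)), w (Suc k)) \<in> T" using st True by simp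
      have "\<exists>j. j \<noteq> w (Suc k) \<and> (w (Suc (Suc k)), j) \<in> T" using deg mem by blast
      then show ?thesis using e by (metis (mono_tags, lifting) someI_ex)
    qed
    show ?case using st ne by simp
  qed
  have rng: "w (2 * k) \<in> fst ` T" for k
    using inv[of "2*k"] by force
  have "\<not> inj (\<lambda>k. w (2 * k))"
  proof
    assume "inj (\<lambda>k. w (2 * k))"
    moreover have "finite (range (\<lambda>k. w (2 * k)))"
      using rng fin by (meson finite_imageI finite_subset image_subsetI)
    ultimately have "finite (UNIV :: nat set)" using finite_imageD by blast
    then show False by simp
  qed
  then obtain k1 k2 where k12: "k1 \<noteq> k2" "w (2 * k1) = w (2 * k2)" unfolding inj_def by blast
  define Q where "Q = (\<lambda>b. \<exists>a<b. even a = even b \<and> w a = w b)"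
  obtain a0 b0 where ab0: "a0 < b0" "w (2 * a0) = w (2 * b0)"
  proof (cases "k1 < k2")
    case True then show ?thesis using that k12 by blast
  next
    case False then have "k2 < k1" using k12 by simp
    then show ?thesis using that[of k2 k1] k12(2) by simp
  qed
  have "Q (2 * b0)"
    unfolding Q_def
  proof (intro exI[of _ "2 * a0"] conjI)
    show "2 * a0 < 2 * b0" using ab0 by simp
    show "even (2 * a0) = even (2 * b0)" by simp
    show "w (2 * a0) = w (2 * b0)" using ab0 by simp
  qed
  then have Qb: "Q (LEAST b. Q b)" by (rule LeastI)
  define b where "b = (LEAST b. Q b)"
  obtain a where ab: "a < b" "even a = even b" "w a = w b" using Qb unfolding Q_def b_def by blast
  have minb: "w x \<noteq> w y" if "x < y" "y < b" "even x = even y" for x y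
  proof
    assume "w x = w y"
    then have "Q y" unfolding Q_def using that by blast
    have "\<not> Q y" using not_less_Least[of y Q] that(2) unfolding b_def by simp
    then show False using \<open>Q y\<close> by contradiction
  qed
  define L where "L = b - a"
  have Lev: "even L" unfolding L_def using ab(1,2)
    by (metis dvd_diff_nat le_add_diff_inverse less_imp_le_nat even_add)
  have L2: "L \<noteq> 2"
  proof
    assume "L = 2"
    then have "b = Suc (Suc a)" unfolding L_def using ab by simp
    then have "w (Suc (Suc a)) = w a" using ab(3) by simp
    then show False using inv[of a] by blast
  qed
  have L4: "4 \<le> L"
  proof -
    have "L \<noteq> 0" unfolding L_def using ab by simp
    moreover have "L \<noteq> 1" "L \<noteq> 3" using Lev by (auto simp del: One_nat_def)
    ultimately show ?thesis using L2 by linarith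
  qed
  define u where "u = (\<lambda>t. w (a + t mod L))"
  have per: "u (t mod L) = u t" for t unfolding u_def by simp
  have inj: "u t \<noteq> u t'" if "even t = even t'" "t mod L \<noteq> t' mod L" for t t'
  proof -
    have p: "even (a + t mod L) = even (a + t' mod L)"
      using that(1) even_mod_evenL[OF Lev, of t] even_mod_evenL[OF Lev, of t'] by simp
    have Lp: "0 < L" using L4 by simp
    have "t mod L < L" "t' mod L < L" using Lp by simp_all
    then have lt: "a + t mod L < b" "a + t' mod L < b" using ab unfolding L_def by linarith+
    show ?thesis
    proof (cases "t mod L < t' mod L")
      case True
      then show ?thesis unfolding u_def using minb[of "a + t mod L" "a + t' mod L"] lt p by simp
    next
      case False
      then have "t' mod L < t mod L" using that(2) by simp
      then show ?thesis unfolding u_def using minb[of "a + t' mod L" "a + t mod L"] lt p by auto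
    qed
  qed
  have suc: "u (Suc t) = w (Suc (a + t mod L))" for t
  proof (cases "Suc (t mod L) < L")
    case True
    then have "Suc t mod L = Suc (t mod L)" by (metis mod_Suc_eq mod_less)
    then show ?thesis unfolding u_def by simp
  next
    case False
    then have "Suc (t mod L) = L" using L4
      using mod_less_divisor[of L t] by linarith
    then have "Suc t mod L = 0" by (metis mod_Suc_eq mod_self)
    then have "u (Suc t) = w b" unfolding u_def using ab by simp
    moreover have "Suc (a + t mod L) = b" using \<open>Suc (t mod L) = L\<close> ab unfolding L_def by simp
    ultimately show ?thesis by simp
  qed
  define pr where "pr = (\<lambda>t. if even (t + a) then (u t, u (Suc t)) else (u (Suc t), u t))"
  have inT: "pr t \<in> T" for t
  proof -
    define P where "P = a + t mod L"
    have eqp: "even (t + a) = even P"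
      using even_mod_evenL[OF Lev, of t] unfolding P_def by auto
    have ut: "u t = w P" "u (Suc t) = w (Suc P)" using suc[of t] unfolding u_def P_def by simp_all
    show ?thesis
    proof (cases "even P")
      case True
      then show ?thesis unfolding pr_def using eqp ut inv[of P] by simp
    next
      case False
      then show ?thesis unfolding pr_def using eqp ut inv[of P] by simp
    qed
  qed
  have "is_circuit (map pr [0..<L])"
    unfolding pr_def by (rule circ[where u=u and L=L and c=a, OF L4 Lev per inj])
  moreover have "set (map pr [0..<L]) \<subseteq> T" using inT by auto
  ultimately show ?thesis by blast
qed



lemma leave: "(x, y) \<in> E\<^sup>* \<Longrightarrow> x \<in> X \<Longrightarrow> y \<notin> X \<Longrightarrow> \<exists>a b. a \<in> X \<and> b \<notin> X \<and> (a, b) \<in> E"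
proof (induction rule: rtrancl_induct)
  case base then show ?case by simp
next
  case (step y z)
  then show ?case by (cases "y \<in> X") auto
qed

lemma lower:
  assumes fin: "finite S" and v0: "v0 \<in> S" and con: "connected_pts S"
  shows "card (fst ` S) + card (snd ` S) \<le> card S + 1"
proof -
  let ?E = "{(x, y). x \<in> S \<and> y \<in> S \<and> adjacent x y}"
  have claim: "k < card S \<Longrightarrow> \<exists>X\<subseteq>S. v0 \<in> X \<and> card X = Suc k \<and> card (fst ` X) + card (snd ` X) \<le> card X + 1" for k
  proof (induction k)
    case 0
    show ?case by (rule exI[of _ "{v0}"]) (use v0 in auto)
  next
    case (Suc k)
    then obtain X where X: "X \<subseteq> S" "v0 \<in> X" "card X = Suc k" "card (fst ` X) + card (snd ` X) \<le> card X + 1"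
      by auto
    have "X \<noteq> S" using X(3) Suc.prems by auto
    then obtain y where y: "y \<in> S" "y \<notin> X" using X(1) by blast
    have "(v0, y) \<in> ?E\<^sup>*" using con v0 y unfolding connected_pts_def by blast
    then obtain x z where xz: "x \<in> X" "z \<notin> X" "(x, z) \<in> ?E" using leave[of v0 y ?E X] X(2) y by blast
    have finX: "finite X" using X(1) fin finite_subset by blast
    have zS: "z \<in> S" and adj: "adjacent x z" using xz by auto
    have cX: "card (insert z X) = Suc (card X)" using finX xz by simp
    have f1: "card (fst ` insert z X) \<le> Suc (card (fst ` X))"
      using finX by (simp add: card_insert_if)
    have f2: "card (snd ` insert z X) \<le> Suc (card (snd ` X))"
      using finX by (simp add: card_insert_if)
    have "fst z \<in> fst ` X \<or> snd z \<in> snd ` X" using adj xz(1) unfolding adjacent_def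
      by (metis image_eqI)
    then have "card (fst ` insert z X) + card (snd ` insert z X) \<le> card (fst ` X) + card (snd ` X) + 1"
    proof
      assume "fst z \<in> fst ` X"
      then have "fst ` insert z X = fst ` X" by auto
      then show ?thesis using f2 by simp
    next
      assume "snd z \<in> snd ` X"
      then have "snd ` insert z X = snd ` X" by auto
      then show ?thesis using f1 by simp
    qed
    then show ?case using X zS cX by (intro exI[of _ "insert z X"]) auto
  qed
  have "card S > 0" using fin v0 card_gt_0_iff by blast
  then obtain X where X: "X \<subseteq> S" "card X = card S" "card (fst ` X) + card (snd ` X) \<le> card X + 1"
    using claim[of "card S - 1"] by auto
  have "X = S" using X fin card_subset_eq by blast
  then show ?thesis using X by simp
qed

lemma upper:
  "finite S \<Longrightarrow> S \<noteq> {} \<Longrightarrow> \<not> (\<exists>vs. set vs \<subseteq> S \<and> is_circuit vs) \<Longrightarrow>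
   card S + 1 \<le> card (fst ` S) + card (snd ` S)"
proof (induction "card S" arbitrary: S rule: less_induct)
  case less
  show ?case
  proof (cases "\<exists>(i, j)\<in>S. (\<forall>j'. (i, j') \<in> S \<longrightarrow> j' = j) \<or> (\<forall>i'. (i', j) \<in> S \<longrightarrow> i' = i)")
    case False
    then have deg: "\<forall>(i, j)\<in>S. (\<exists>i'. i' \<noteq> i \<and> (i', j) \<in> S) \<and> (\<exists>j'. j' \<noteq> j \<and> (i, j') \<in> S)"
      by blast
    obtain i0 j0 where "(i0, j0) \<in> S" using less.prems(2) by auto
    then show ?thesis using walk_circuit[OF less.prems(1) _ deg] less.prems(3) by blast
  next
    case True
    then obtain i j where v: "(i, j) \<in> S" and
      leaf: "(\<forall>j'. (i, j') \<in> S \<longrightarrow> j' = j) \<or> (\<forall>i'. (i', j) \<in> S \<longrightarrow> i' = i)" by blast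
    define S' where "S' = S - {(i, j)}"
    show ?thesis
    proof (cases "S' = {}")
      case True
      then have "S = {(i, j)}" using v unfolding S'_def by blast
      then show ?thesis by simp
    next
      case False
      have finS': "finite S'" using less.prems(1) unfolding S'_def by simp
      have cS': "card S' < card S" unfolding S'_def using card_Diff1_less[OF less.prems(1) v] by simp
      have cS'': "card S = Suc (card S')" unfolding S'_def using v less.prems(1)
        using card_Suc_Diff1[OF less.prems(1) v] by simp
      have "\<not> (\<exists>vs. set vs \<subseteq> S' \<and> is_circuit vs)" using less.prems(3) unfolding S'_def by blast
      then have IH: "card S' + 1 \<le> card (fst ` S') + card (snd ` S')"
        using less.hyps[OF cS' finS' False] by blast
      have sub1: "fst ` S' \<subseteq> fst ` S" "snd ` S' \<subseteq> snd ` S" unfolding S'_def by auto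
      have c1: "card (fst ` S') \<le> card (fst ` S)" "card (snd ` S') \<le> card (snd ` S)"
        using sub1 less.prems(1) by (simp_all add: card_mono)
      from leaf show ?thesis
      proof
        assume h: "\<forall>j'. (i, j') \<in> S \<longrightarrow> j' = j"
        have "fst ` S' \<subseteq> fst ` S - {i}" unfolding S'_def using h by force
        moreover have "i \<in> fst ` S" using v by force
        ultimately have "fst ` S' \<subset> fst ` S" by blast
        then have "card (fst ` S') < card (fst ` S)" using less.prems(1)
          by (simp add: psubset_card_mono)
        then show ?thesis using IH c1 cS'' by linarith
      next
        assume h: "\<forall>i'. (i', j) \<in> S \<longrightarrow> i' = i"
        have "snd ` S' \<subseteq> snd ` S - {j}" unfolding S'_def using h by force
        moreover have "j \<in> snd ` S" using v by force
        ultimately have "snd ` S' \<subset> snd ` S" by blast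
        then have "card (snd ` S') < card (snd ` S)" using less.prems(1)
          by (simp add: psubset_card_mono)
        then show ?thesis using IH c1 cS'' by linarith
      qed
    qed
  qed
qed



theorem lemma2p2:
  fixes m n :: nat and p q :: "nat \<Rightarrow> real" and P :: "nat \<Rightarrow> nat \<Rightarrow> real"
  assumes "2 \<le> m" and "2 \<le> n"
    and "\<forall>i<m. 0 < p i" and "(\<Sum>i<m. p i) = 1"
    and "\<forall>j<n. 0 < q j" and "(\<Sum>j<n. q j) = 1"
    and "coupling m n p q P"
    and "local_optimal m n P"
    and "is_tree (supp m n P)"
  shows "card (supp m n P) = m + n - 1"
proof -
  define S where "S = supp m n P"
  have finS: "finite S"
  proof (rule finite_subset)
    show "S \<subseteq> {..<m} \<times> {..<n}" unfolding S_def supp_def by auto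
  qed simp
  have R: "fst ` S = {..<m}"
  proof
    show "fst ` S \<subseteq> {..<m}" unfolding S_def supp_def by auto
    show "{..<m} \<subseteq> fst ` S"
    proof
      fix i assume i: "i \<in> {..<m}"
      have "(\<Sum>j<n. P i j) = p i" using assms(7) i unfolding coupling_def by auto
      moreover have "p i > 0" using assms(3) i by auto
      ultimately have "\<exists>j<n. P i j \<noteq> 0"
        by (metis (mono_tags, lifting) lessThan_iff less_irrefl sum.neutral)
      then obtain j where "j < n" "P i j \<noteq> 0" by blast
      then have "(i, j) \<in> S" unfolding S_def supp_def using i by auto
      then show "i \<in> fst ` S" by force
    qed
  qed
  have C: "snd ` S = {..<n}"
  proof
    show "snd ` S \<subseteq> {..<n}" unfolding S_def supp_def by auto
    show "{..<n} \<subseteq> snd ` S"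
    proof
      fix j assume j: "j \<in> {..<n}"
      have "(\<Sum>i<m. P i j) = q j" using assms(7) j unfolding coupling_def by auto
      moreover have "q j > 0" using assms(5) j by auto
      ultimately have "\<exists>i<m. P i j \<noteq> 0"
        by (metis (mono_tags, lifting) lessThan_iff less_irrefl sum.neutral)
      then obtain i where "i < m" "P i j \<noteq> 0" by blast
      then have "(i, j) \<in> S" unfolding S_def supp_def using j by auto
      then show "j \<in> snd ` S" by force
    qed
  qed
  have "0 \<in> fst ` S" using R assms(1) by simp
  then have ne: "S \<noteq> {}" by auto
  then obtain v0 where v0: "v0 \<in> S" by blast
  have tr: "connected_pts S" "\<not> (\<exists>vs. set vs \<subseteq> S \<and> is_circuit vs)"
    using assms(9) unfolding is_tree_def S_def by auto
  have "card S + 1 \<le> m + n" using upper[OF finS ne tr(2)] R C by simp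
  moreover have "m + n \<le> card S + 1" using lower[OF finS v0 tr(1)] R C by simp
  ultimately show ?thesis unfolding S_def[symmetric] by simp
qed

end
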